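(* Fix a policy $\pi$ and $0 \le \eta < 1$, and a random field $Z_0$. Define $Z_{t+1} = \mathcal{T}^{\pi,\eta} Z_t$ and $Z^0_{t+1} = \mathcal{T}^{\pi} Z^0_t$ for $t \ge 0$, with $Z^0_0 = Z_0$. Then for all $s\in\mathcal{S}$, $a\in\mathcal{A}$ and $t \ge 0$, $\mathbb{E}_z Z_t(s,a) \le \mathbb{E}_z Z^0_t(s,a)$.
   Context: Setting: a Markov decision process with state space $\mathcal{S}$, action space $\mathcal{A}$, kernel $p_{\text{env}}(\cdot\mid s,a)$ giving a joint law of reward $r$ and next state $s'$, stochastic policy $\pi(\cdot\mid s)$, discount $\gamma\in[0,1)$. A random field $Z$ assigns to each $(s,a)$ an integrable real random variable $Z(s,a)$ (only its law matters); $\mathbb{E}_z Z(s,a) = \mathbb{E}[Z(s,a)]$. Distributional Bellman operator: $[\mathcal{T}^\pi Z](s,a)$ has the law of $r+\gamma Z(s',a')$ with $(r,s')\sim p_{\text{env}}(\cdot\mid s,a)$, $a'\sim\pi(\cdot\mid s')$, $Z(s',a')$ drawn independently given $(r,s',a')$. For a real random variable $Z$ with continuous distribution function $F_Z$ and quantile function $F_Z^{-1}(u)=\inf\{z: F_Z(z)\ge u\}$, the truncation $\mathcal{S}^\eta(Z)$ has distribution function $F_Z(z)/(1-\eta)$ for $z \le F_Z^{-1}(1-\eta)$ and $1$ for $z > F_Z^{-1}(1-\eta)$; for a random field it is applied pointwise in $(s,a)$. The truncated operator is $\mathcal{T}^{\pi,\eta} = \mathcal{T}^\pi\circ\mathcal{S}^\eta$.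 Standing assumption: all random variables $Z_t(s,a)$ have continuous distribution functions so that the truncations are well defined. *)

theory Defs
  imports "HOL-Probability.Probability"
begin

text \<open>Random fields are represented by their laws: a random field assigns to each
  state-action pair (s,a) a (probability) measure on the reals, the law of Z(s,a).\<close>

type_synonym ('s, 'a) rfield = "'s \<times> 'a \<Rightarrow> real measure"

definition cdf_of :: "real measure \<Rightarrow> real \<Rightarrow> real" where
  "cdf_of M z = measure M {..z}"

text \<open>Quantile function F^{-1}(u) = inf {z. F z \<ge> u}, taken in the extended reals
  (it is +\<infinity> when the set is empty, e.g. u = 1 for unbounded support).\<close>
definition quantile_of :: "real measure \<Rightarrow> real \<Rightarrow> ereal" where
  "quantile_of M u = Inf (ereal ` {z. cdf_of M z \<ge> u})"

definition trunc_cdf :: "real \<Rightarrow> real measure \<Rightarrow> real \<Rightarrow> real" where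
  "trunc_cdf \<eta> M z =
     (if ereal z \<le> quantile_of M (1 - \<eta>) then cdf_of M z / (1 - \<eta>) else 1)"

definition truncate :: "real \<Rightarrow> real measure \<Rightarrow> real measure" where
  "truncate \<eta> M = interval_measure (trunc_cdf \<eta> M)"

definition truncate_field :: "real \<Rightarrow> ('s, 'a) rfield \<Rightarrow> ('s, 'a) rfield" where
  "truncate_field \<eta> Z = (\<lambda>sa. truncate \<eta> (Z sa))"

definition bellman ::
  "('s \<times> 'a \<Rightarrow> (real \<times> 's) measure) \<Rightarrow> ('s \<Rightarrow> 'a measure) \<Rightarrow> real
     \<Rightarrow> ('s, 'a) rfield \<Rightarrow> ('s, 'a) rfield" where
  "bellman penv pol \<gamma> Z = (\<lambda>sa. penv sa \<bind> (\<lambda>(r, s'). pol s' \<bind>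
       (\<lambda>a'. distr (Z (s', a')) borel (\<lambda>z. r + \<gamma> * z))))"

definition bellman_trunc ::
  "('s \<times> 'a \<Rightarrow> (real \<times> 's) measure) \<Rightarrow> ('s \<Rightarrow> 'a measure) \<Rightarrow> real \<Rightarrow> real
     \<Rightarrow> ('s, 'a) rfield \<Rightarrow> ('s, 'a) rfield" where
  "bellman_trunc penv pol \<gamma> \<eta> Z = bellman penv pol \<gamma> (truncate_field \<eta> Z)"

definition expect :: "real measure \<Rightarrow> real" where
  "expect M = integral\<^sup>L M (\<lambda>x. x)"

definition is_rfield :: "'s measure \<Rightarrow> 'a measure \<Rightarrow> ('s, 'a) rfield \<Rightarrow> bool" where
  "is_rfield S A Z \<longleftrightarrow> Z \<in> measurable (S \<Otimes>\<^sub>M A) (prob_algebra borel) \<and>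
     (\<forall>s\<in>space S. \<forall>a\<in>space A. integrable (Z (s, a)) (\<lambda>x. x))"

end

theory Submission
  imports Defs
begin



lemma expect_bind:
  fixes M :: "'b measure" and K :: "'b \<Rightarrow> real measure"
  assumes K[measurable]: "K \<in> measurable M (subprob_algebra borel)"
    and int: "integrable (M \<bind> K) (\<lambda>x. x)"
    and ne: "space M \<noteq> {}"
  shows "AE \<omega> in M. integrable (K \<omega>) (\<lambda>x. x)"
    and "integrable M (\<lambda>\<omega>. expect (K \<omega>))"
    and "expect (M \<bind> K) = (\<integral>\<omega>. expect (K \<omega>) \<partial>M)"
proof -
  define P where "P \<omega> = (\<integral>\<^sup>+x. ennreal x \<partial>K \<omega>)" for \<omega>
  define Q where "Q \<omega> = (\<integral>\<^sup>+x. ennreal (- x) \<partial>K \<omega>)" for \<omega>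
  define R where "R \<omega> = (\<integral>\<^sup>+x. ennreal (norm x) \<partial>K \<omega>)" for \<omega>
  have [measurable]: "P \<in> borel_measurable M" "Q \<in> borel_measurable M" "R \<in> borel_measurable M"
    unfolding P_def Q_def R_def by measurable
  have setsK: "sets (K \<omega>) = sets borel" if "\<omega> \<in> space M" for \<omega>
    using measurable_space[OF K that] by (simp add: space_subprob_algebra)
  have bP: "(\<integral>\<^sup>+x. ennreal x \<partial>(M \<bind> K)) = (\<integral>\<^sup>+\<omega>. P \<omega> \<partial>M)"
    unfolding P_def by (rule nn_integral_bind[OF _ K]) measurable
  have bQ: "(\<integral>\<^sup>+x. ennreal (- x) \<partial>(M \<bind> K)) = (\<integral>\<^sup>+\<omega>. Q \<omega> \<partial>M)"
    unfolding Q_def by (rule nn_integral_bind[OF _ K]) measurable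
  have bR: "(\<integral>\<^sup>+x. ennreal (norm x) \<partial>(M \<bind> K)) = (\<integral>\<^sup>+\<omega>. R \<omega> \<partial>M)"
    unfolding R_def by (rule nn_integral_bind[OF _ K]) measurable
  have fR: "(\<integral>\<^sup>+\<omega>. R \<omega> \<partial>M) \<noteq> \<infinity>"
    using int bR unfolding integrable_iff_bounded by (simp add: less_top)
  have fP: "(\<integral>\<^sup>+\<omega>. P \<omega> \<partial>M) \<noteq> \<infinity>" "(\<integral>\<^sup>+\<omega>. Q \<omega> \<partial>M) \<noteq> \<infinity>"
    using int bP bQ by (simp_all add: real_integrable_def)
  have aeR: "AE \<omega> in M. R \<omega> \<noteq> \<infinity>" by (rule nn_integral_PInf_AE) (use fR in auto)
  have aeP: "AE \<omega> in M. P \<omega> \<noteq> \<infinity>" by (rule nn_integral_PInf_AE) (use fP in auto)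
  have aeQ: "AE \<omega> in M. Q \<omega> \<noteq> \<infinity>" by (rule nn_integral_PInf_AE) (use fP in auto)
  show ae: "AE \<omega> in M. integrable (K \<omega>) (\<lambda>x. x)"
    using aeR
  proof (rule AE_mp, intro AE_I2 impI)
    fix \<omega> assume "\<omega> \<in> space M" "R \<omega> \<noteq> \<infinity>"
    then show "integrable (K \<omega>) (\<lambda>x. x)"
      unfolding integrable_iff_bounded R_def
      using measurable_cong_sets[OF setsK refl, of \<omega> borel] by (simp add: less_top)
  qed
  have eq: "AE \<omega> in M. expect (K \<omega>) = enn2real (P \<omega>) - enn2real (Q \<omega>)"
    using ae by eventually_elim (simp add: expect_def P_def Q_def real_lebesgue_integral_def)
  have [measurable]: "(\<lambda>\<omega>. expect (K \<omega>)) \<in> borel_measurable M"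
    unfolding expect_def by measurable
  have iP: "integrable M (\<lambda>\<omega>. enn2real (P \<omega>))"
    unfolding integrable_iff_bounded
  proof (intro conjI)
    have "(\<integral>\<^sup>+\<omega>. ennreal (norm (enn2real (P \<omega>))) \<partial>M) \<le> (\<integral>\<^sup>+\<omega>. P \<omega> \<partial>M)"
      by (intro nn_integral_mono) (simp add: ennreal_enn2real_if)
    then show "(\<integral>\<^sup>+\<omega>. ennreal (norm (enn2real (P \<omega>))) \<partial>M) < \<infinity>"
      using fP(1) by (simp add: less_top)
  qed measurable
  have iQ: "integrable M (\<lambda>\<omega>. enn2real (Q \<omega>))"
    unfolding integrable_iff_bounded
  proof (intro conjI)
    have "(\<integral>\<^sup>+\<omega>. ennreal (norm (enn2real (Q \<omega>))) \<partial>M) \<le> (\<integral>\<^sup>+\<omega>. Q \<omega> \<partial>M)"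
      by (intro nn_integral_mono) (simp add: ennreal_enn2real_if)
    then show "(\<integral>\<^sup>+\<omega>. ennreal (norm (enn2real (Q \<omega>))) \<partial>M) < \<infinity>"
      using fP(2) by (simp add: less_top)
  qed measurable
  have iD: "integrable M (\<lambda>\<omega>. enn2real (P \<omega>) - enn2real (Q \<omega>))"
    using iP iQ by auto
  show "integrable M (\<lambda>\<omega>. expect (K \<omega>))"
    by (rule integrable_cong_AE_imp[OF iD]) (use eq in \<open>auto simp: eq_commute\<close>)
  have "(\<integral>\<omega>. expect (K \<omega>) \<partial>M) = (\<integral>\<omega>. enn2real (P \<omega>) - enn2real (Q \<omega>) \<partial>M)"
    using eq by (intro integral_cong_AE) auto
  also have "\<dots> = (\<integral>\<omega>. enn2real (P \<omega>) \<partial>M) - (\<integral>\<omega>. enn2real (Q \<omega>) \<partial>M)"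
    by (rule Bochner_Integration.integral_diff[OF iP iQ])
  also have "(\<integral>\<omega>. enn2real (P \<omega>) \<partial>M) = enn2real (\<integral>\<^sup>+\<omega>. ennreal (enn2real (P \<omega>)) \<partial>M)"
    by (rule integral_eq_nn_integral) auto
  also have "(\<integral>\<^sup>+\<omega>. ennreal (enn2real (P \<omega>)) \<partial>M) = (\<integral>\<^sup>+\<omega>. P \<omega> \<partial>M)"
    by (rule nn_integral_cong_AE) (use aeP in \<open>eventually_elim, simp add: ennreal_enn2real_if\<close>)
  also have "(\<integral>\<omega>. enn2real (Q \<omega>) \<partial>M) = enn2real (\<integral>\<^sup>+\<omega>. ennreal (enn2real (Q \<omega>)) \<partial>M)"
    by (rule integral_eq_nn_integral) auto
  also have "(\<integral>\<^sup>+\<omega>. ennreal (enn2real (Q \<omega>)) \<partial>M) = (\<integral>\<^sup>+\<omega>. Q \<omega> \<partial>M)"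
    by (rule nn_integral_cong_AE) (use aeQ in \<open>eventually_elim, simp add: ennreal_enn2real_if\<close>)
  finally show "expect (M \<bind> K) = (\<integral>\<omega>. expect (K \<omega>) \<partial>M)"
    using int by (simp add: expect_def real_lebesgue_integral_def bP bQ)
qed




lemma distr_nonmeas_zero:
  assumes f: "f \<in> space M \<rightarrow> space N" and nm: "f \<notin> measurable M N"
    and nz: "emeasure M (space M) \<noteq> 0"
  shows "emeasure (distr M N f) A = 0"
proof -
  let ?\<mu> = "\<lambda>A. emeasure M (f -` A \<inter> space M)"
  have ss: "sigma_sets (space N) (sets N) = sets N"
    by (simp add: sets.sigma_sets_eq)
  have notms: "\<not> measure_space (space N) (sets N) ?\<mu>"
  proof
    assume ms: "measure_space (space N) (sets N) ?\<mu>"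
    have em: "emeasure (distr M N f) X = ?\<mu> X" if "X \<in> sets N" for X
      using ms that unfolding distr_def by (simp add: emeasure_measure_of_conv ss)
    obtain B where B: "B \<in> sets N" "f -` B \<inter> space M \<notin> sets M"
      using nm f by (auto simp: measurable_def)
    have C: "f -` (space N - B) \<inter> space M \<notin> sets M"
    proof
      assume "f -` (space N - B) \<inter> space M \<in> sets M"
      then have "space M - (f -` (space N - B) \<inter> space M) \<in> sets M" by auto
      moreover have "space M - (f -` (space N - B) \<inter> space M) = f -` B \<inter> space M"
        using f sets.sets_into_space[OF B(1)] by auto
      ultimately show False using B by simp
    qed
    have "emeasure (distr M N f) B + emeasure (distr M N f) (space N - B) =
          emeasure (distr M N f) (B \<union> (space N - B))"
      by (rule plus_emeasure) (use B in auto)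
    also have "B \<union> (space N - B) = space N" using sets.sets_into_space[OF B(1)] by auto
    finally have "?\<mu> B + ?\<mu> (space N - B) = ?\<mu> (space N)"
      using B by (simp add: em)
    moreover have "?\<mu> B = 0" "?\<mu> (space N - B) = 0"
      using B C by (simp_all add: emeasure_notin_sets)
    moreover have "f -` space N \<inter> space M = space M" using f by auto
    ultimately show False using nz by simp
  qed
  then show ?thesis
    unfolding distr_def by (simp add: emeasure_measure_of_conv ss)
qed

lemma emeasure_join_zero:
  assumes "sets D = sets (subprob_algebra N)" "\<And>X. emeasure D X = 0" "A \<in> sets N"
  shows "emeasure (join D) A = 0"
proof -
  have "emeasure (join D) A = (\<integral>\<^sup>+M'. emeasure M' A \<partial>D)"
    by (rule emeasure_join) (use assms in auto)
  also have "\<dots> = (\<integral>\<^sup>+M'. 0 \<partial>D)"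
    by (rule nn_integral_cong_AE, rule AE_I[of _ _ "space D"]) (use assms in auto)
  finally show ?thesis by simp
qed

lemma bind_meas_from_nonzero:
  assumes ne: "space M \<noteq> {}"
    and KN: "\<And>x. x \<in> space M \<Longrightarrow> K x \<in> space (subprob_algebra N)"
    and nz: "emeasure M (space M) \<noteq> 0"
    and bnz: "emeasure (M \<bind> K) (space N) \<noteq> 0"
  shows "K \<in> measurable M (subprob_algebra N)"
proof (rule ccontr)
  assume nm: "K \<notin> measurable M (subprob_algebra N)"
  define x0 where "x0 = (SOME x. x \<in> space M)"
  have x0: "x0 \<in> space M" using ne unfolding x0_def by (simp add: some_in_eq)
  have "sets (K x0) = sets N" using KN[OF x0] by (simp add: space_subprob_algebra)
  then have sa: "subprob_algebra (K x0) = subprob_algebra N" by (rule subprob_algebra_cong)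
  have "M \<bind> K = join (distr M (subprob_algebra N) K)"
    using ne by (simp add: bind_nonempty x0_def[symmetric] sa)
  moreover have "emeasure (join (distr M (subprob_algebra N) K)) (space N) = 0"
    by (rule emeasure_join_zero) (use distr_nonmeas_zero[OF _ nm nz] KN in \<open>auto simp: Pi_iff\<close>)
  ultimately show False using bnz by simp
qed

lemma bind_in_subprob:
  assumes M: "prob_space M"
    and KN: "\<And>x. x \<in> space M \<Longrightarrow> K x \<in> space (subprob_algebra N)"
    and neN: "space N \<noteq> {}"
  shows "M \<bind> K \<in> space (subprob_algebra N)"
proof -
  have ne: "space M \<noteq> {}" using M by (simp add: prob_space.not_empty)
  define x0 where "x0 = (SOME x. x \<in> space M)"
  have x0: "x0 \<in> space M" using ne unfolding x0_def by (simp add: some_in_eq)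
  have sN: "sets (K x0) = sets N" using KN[OF x0] by (simp add: space_subprob_algebra)
  then have sa: "subprob_algebra (K x0) = subprob_algebra N" by (rule subprob_algebra_cong)
  have eq: "M \<bind> K = join (distr M (subprob_algebra N) K)"
    using ne by (simp add: bind_nonempty x0_def[symmetric] sa)
  have sets: "sets (M \<bind> K) = sets N"
    using KN ne by (intro sets_bind) (auto simp: space_subprob_algebra)
  show ?thesis
  proof (cases "K \<in> measurable M (subprob_algebra N)")
    case True
    have "subprob_space (M \<bind> K)"
      by (rule subprob_space_bind[OF _ True]) (use M in \<open>simp add: prob_space_imp_subprob_space\<close>)
    then show ?thesis using sets by (simp add: space_subprob_algebra)
  next
    case False
    have nz: "emeasure M (space M) \<noteq> 0" using M by (simp add: prob_space.emeasure_space_1)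
    have z: "emeasure (M \<bind> K) A = 0" if "A \<in> sets N" for A
      unfolding eq
      by (rule emeasure_join_zero) (use distr_nonmeas_zero[OF _ False nz] KN that in \<open>auto simp: Pi_iff\<close>)
    have "space (M \<bind> K) = space N" using sets by (rule sets_eq_imp_space_eq)
    then have "subprob_space (M \<bind> K)"
      using z[of "space N"] neN by (intro subprob_spaceI) auto
    then show ?thesis using sets by (simp add: space_subprob_algebra)
  qed
qed




lemma AE_bind_full:
  assumes M: "prob_space M" and K[measurable]: "K \<in> measurable M (subprob_algebra N)"
    and B: "prob_space (M \<bind> K)"
  shows "AE \<omega> in M. emeasure (K \<omega>) (space N) = 1"
proof -
  interpret M: prob_space M by fact
  define f where "f \<omega> = emeasure (K \<omega>) (space N)" for \<omega>
  have fm[measurable]: "f \<in> borel_measurable M"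
    unfolding f_def by (rule measurable_compose[OF K measurable_emeasure_subprob_algebra]) simp
  have sK: "K \<omega> \<in> space (subprob_algebra N)" if "\<omega> \<in> space M" for \<omega>
    using measurable_space[OF K that] .
  have f1: "f \<omega> \<le> 1" if "\<omega> \<in> space M" for \<omega>
  proof -
    have "subprob_space (K \<omega>)" "sets (K \<omega>) = sets N" using sK[OF that] by (auto simp: space_subprob_algebra)
    then show ?thesis unfolding f_def
      using subprob_space.emeasure_space_le_1 sets_eq_imp_space_eq by metis
  qed
  have "space (M \<bind> K) = space N"
    using sK M.not_empty by (intro space_bind) (auto simp: space_subprob_algebra)
  then have "emeasure (M \<bind> K) (space N) = 1"
    using B by (metis prob_space.emeasure_space_1)
  then have i1: "(\<integral>\<^sup>+\<omega>. f \<omega> \<partial>M) = 1"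
    unfolding f_def using emeasure_bind[OF M.not_empty K, of "space N"] by simp
  have "(\<integral>\<^sup>+\<omega>. 1 - f \<omega> \<partial>M) = (\<integral>\<^sup>+\<omega>. 1 \<partial>M) - (\<integral>\<^sup>+\<omega>. f \<omega> \<partial>M)"
    by (rule nn_integral_diff) (use i1 f1 in auto)
  also have "\<dots> = 0" using i1 by (simp add: M.emeasure_space_1)
  finally have "AE \<omega> in M. 1 - f \<omega> = 0"
    by (subst (asm) nn_integral_0_iff_AE) auto
  then show ?thesis
  proof (rule AE_mp, intro AE_I2 impI)
    fix \<omega> assume "\<omega> \<in> space M" "1 - f \<omega> = 0"
    then show "emeasure (K \<omega>) (space N) = 1"
      using f1[of \<omega>] unfolding f_def by (metis antisym ennreal_minus_eq_0)
  qed
qed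

lemma expect_distr_affine:
  assumes "W \<in> space (prob_algebra borel)" "integrable W (\<lambda>x::real. x)"
  shows "expect (distr W borel (\<lambda>z. r + \<gamma> * z)) = r + \<gamma> * expect W"
    and "integrable (distr W borel (\<lambda>z. r + \<gamma> * z)) (\<lambda>x. x)"
proof -
  have P: "prob_space W" and s: "sets W = sets borel" using assms(1) by (auto simp: space_prob_algebra)
  have m: "(\<lambda>z. r + \<gamma> * z) \<in> measurable W borel"
    unfolding measurable_cong_sets[OF s refl] by measurable
  have "expect (distr W borel (\<lambda>z. r + \<gamma> * z)) = (\<integral>z. r + \<gamma> * z \<partial>W)"
    unfolding expect_def by (rule integral_distr[OF m]) measurable
  also have "\<dots> = (\<integral>z. r \<partial>W) + (\<integral>z. \<gamma> * z \<partial>W)"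
    by (rule Bochner_Integration.integral_add) (use assms(2) P in \<open>simp_all add: prob_space.finite_measure finite_measure.integrable_const\<close>)
  also have "\<dots> = r + \<gamma> * expect W"
    using P by (simp add: prob_space.prob_space expect_def)
  finally show "expect (distr W borel (\<lambda>z. r + \<gamma> * z)) = r + \<gamma> * expect W" .
  show "integrable (distr W borel (\<lambda>z. r + \<gamma> * z)) (\<lambda>x. x)"
  proof (subst integrable_distr_eq[OF m])
    interpret prob_space W by (rule P)
    show "integrable W (\<lambda>x. r + \<gamma> * x)"
      by (intro Bochner_Integration.integrable_add integrable_mult_right assms(2)) simp_all
  qed simp
qed




lemma bellman_expect:
  fixes S :: "'s measure" and A :: "'a measure" and W :: "('s, 'a) rfield"
    and penv :: "'s \<times> 'a \<Rightarrow> (real \<times> 's) measure" and pol :: "'s \<Rightarrow> 'a measure"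
  assumes Msp: "penv sa \<in> space (prob_algebra (borel \<Otimes>\<^sub>M S))"
    and pol: "pol \<in> measurable S (prob_algebra A)"
    and W0: "\<forall>s'\<in>space S. \<forall>a'\<in>space A.
              W (s', a') \<in> space (prob_algebra borel) \<and> integrable (W (s', a')) (\<lambda>x. x)"
    and B: "bellman penv pol \<gamma> W sa \<in> space (prob_algebra borel)"
           "integrable (bellman penv pol \<gamma> W sa) (\<lambda>x. x)"
    and K_def: "K = (\<lambda>(r, s'). pol s' \<bind> (\<lambda>a'. distr (W (s', a')) borel (\<lambda>z. r + \<gamma> * z)))"
  shows "integrable (penv sa) (\<lambda>\<omega>. expect (K \<omega>))"
    and "expect (bellman penv pol \<gamma> W sa) = (\<integral>\<omega>. expect (K \<omega>) \<partial>penv sa)"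
    and "AE \<omega> in penv sa. integrable (pol (snd \<omega>)) (\<lambda>a'. fst \<omega> + \<gamma> * expect (W (snd \<omega>, a'))) \<and>
           expect (K \<omega>) = (\<integral>a'. fst \<omega> + \<gamma> * expect (W (snd \<omega>, a')) \<partial>pol (snd \<omega>))"
proof -
  have W: "W (s', a') \<in> space (prob_algebra borel) \<and> integrable (W (s', a')) (\<lambda>x. x)"
    if "s' \<in> space S" "a' \<in> space A" for s' a' using W0 that by blast
  let ?M = "penv sa"
  have Mp: "prob_space ?M" and Ms: "sets ?M = sets (borel \<Otimes>\<^sub>M S)"
    using Msp by (auto simp: space_prob_algebra)
  have spM: "space ?M = UNIV \<times> space S"
    using sets_eq_imp_space_eq[OF Ms] by (simp add: space_pair_measure)
  have neM: "space ?M \<noteq> {}" using Mp by (simp add: prob_space.not_empty)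
  have bd: "bellman penv pol \<gamma> W sa = ?M \<bind> K"
    unfolding bellman_def K_def by simp
  have polx: "prob_space (pol s')" "sets (pol s') = sets A" "space (pol s') = space A"
    if "s' \<in> space S" for s'
  proof -
    have "pol s' \<in> space (prob_algebra A)" using measurable_space[OF pol that] .
    then show "prob_space (pol s')" "sets (pol s') = sets A" by (auto simp: space_prob_algebra)
    then show "space (pol s') = space A" by (metis sets_eq_imp_space_eq)
  qed
  have Nin: "distr (W (s', a')) borel (\<lambda>z. r + \<gamma> * z) \<in> space (subprob_algebra borel)"
    if "s' \<in> space S" "a' \<in> space A" for r s' a'
  proof -
    have P: "prob_space (W (s', a'))" and s: "sets (W (s', a')) = sets borel"
      using W[OF that] by (auto simp: space_prob_algebra)
    have m: "(\<lambda>z. r + \<gamma> * z) \<in> measurable (W (s', a')) borel"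
      unfolding measurable_cong_sets[OF s refl] by measurable
    have "prob_space (distr (W (s', a')) borel (\<lambda>z. r + \<gamma> * z))"
      by (rule prob_space.prob_space_distr[OF P m])
    then show ?thesis by (simp add: space_subprob_algebra prob_space_imp_subprob_space)
  qed
  have Kin: "K \<omega> \<in> space (subprob_algebra borel)" if om: "\<omega> \<in> space ?M" for \<omega>
  proof -
    obtain r s' where \<omega>: "\<omega> = (r, s')" "s' \<in> space S" using om spM by auto
    show ?thesis unfolding K_def \<omega>(1) case_prod_conv
      by (rule bind_in_subprob) (use polx[OF \<omega>(2)] Nin[OF \<omega>(2)] in auto)
  qed
  have Bp: "prob_space (?M \<bind> K)" using B(1) bd by (simp add: space_prob_algebra)
  have Km: "K \<in> measurable ?M (subprob_algebra borel)"
  proof (rule bind_meas_from_nonzero[OF neM Kin])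
    show "emeasure ?M (space ?M) \<noteq> 0" using Mp by (simp add: prob_space.emeasure_space_1)
    have "space (?M \<bind> K) = space borel"
      using Kin neM by (intro space_bind) (auto simp: space_subprob_algebra)
    then show "emeasure (?M \<bind> K) (space borel) \<noteq> 0"
      using Bp by (metis prob_space.emeasure_space_1 one_neq_zero)
  qed auto
  have int: "integrable (?M \<bind> K) (\<lambda>x. x)" using B(2) bd by simp
  note EB = expect_bind[OF Km int neM]
  show "integrable ?M (\<lambda>\<omega>. expect (K \<omega>))" by (rule EB(2))
  show "expect (bellman penv pol \<gamma> W sa) = (\<integral>\<omega>. expect (K \<omega>) \<partial>?M)" using EB(3) bd by simp
  have AEf: "AE \<omega> in ?M. emeasure (K \<omega>) (space borel) = 1"
    by (rule AE_bind_full[OF Mp Km Bp])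
  show "AE \<omega> in ?M. integrable (pol (snd \<omega>)) (\<lambda>a'. fst \<omega> + \<gamma> * expect (W (snd \<omega>, a'))) \<and>
           expect (K \<omega>) = (\<integral>a'. fst \<omega> + \<gamma> * expect (W (snd \<omega>, a')) \<partial>pol (snd \<omega>))"
    using AEf EB(1) AE_space
  proof (eventually_elim)
    case (elim \<omega>)
    then have e1: "emeasure (K \<omega>) (space borel) = 1" and iK: "integrable (K \<omega>) (\<lambda>x. x)" by auto
    have \<omega>M: "\<omega> \<in> space ?M" using elim by simp
    obtain r s' where \<omega>: "\<omega> = (r, s')" "s' \<in> space S" using \<omega>M spM by auto
    define N where "N a' = distr (W (s', a')) borel (\<lambda>z. r + \<gamma> * z)" for a'
    have KN: "K \<omega> = pol s' \<bind> N" unfolding K_def N_def \<omega>(1) by simp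
    note px = polx[OF \<omega>(2)]
    have neP: "space (pol s') \<noteq> {}" using px(1) by (simp add: prob_space.not_empty)
    have Nm: "N \<in> measurable (pol s') (subprob_algebra borel)"
    proof (rule bind_meas_from_nonzero[OF neP])
      show "N x \<in> space (subprob_algebra borel)" if "x \<in> space (pol s')" for x
        unfolding N_def using Nin[OF \<omega>(2)] that px(3) by auto
      show "emeasure (pol s') (space (pol s')) \<noteq> 0" using px(1) by (simp add: prob_space.emeasure_space_1)
      show "emeasure (pol s' \<bind> N) (space borel) \<noteq> 0" using e1 KN by simp
    qed
    have intK: "integrable (pol s' \<bind> N) (\<lambda>x. x)" using iK KN by simp
    note EB2 = expect_bind[OF Nm intK neP]
    have eN: "expect (N a') = r + \<gamma> * expect (W (s', a'))" if "a' \<in> space (pol s')" for a'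
      unfolding N_def by (rule expect_distr_affine(1)) (use W[OF \<omega>(2)] that px(3) in auto)
    have "integrable (pol s') (\<lambda>a'. r + \<gamma> * expect (W (s', a')))"
    proof -
      have "integrable (pol s') (\<lambda>a'. expect (N a')) = integrable (pol s') (\<lambda>a'. r + \<gamma> * expect (W (s', a')))"
        by (rule Bochner_Integration.integrable_cong[OF refl]) (rule eN)
      then show ?thesis using EB2(2) by simp
    qed
    moreover have "expect (K \<omega>) = (\<integral>a'. r + \<gamma> * expect (W (s', a')) \<partial>pol s')"
      using EB2(3) KN eN by (simp cong: Bochner_Integration.integral_cong)
    ultimately show ?case using \<omega>(1) by simp
  qed
qed




lemma interval_measure_cdf:
  assumes "real_distribution N"
  shows "interval_measure (cdf N) = N"
proof -
  interpret N: real_distribution N by fact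
  have a: "\<And>x y. x \<le> y \<Longrightarrow> cdf N x \<le> cdf N y" by (rule N.cdf_nondecreasing)
  have b: "\<And>a. continuous (at_right a) (cdf N)" by (rule N.cdf_is_right_cont)
  have c: "(cdf N \<longlongrightarrow> 0) at_bot" by (rule N.cdf_lim_at_bot)
  have d: "(cdf N \<longlongrightarrow> 1) at_top" by (rule N.cdf_lim_at_top_prob)
  have R: "real_distribution (interval_measure (cdf N))"
    using real_distribution_interval_measure[of "cdf N"] a b c d by blast
  have "cdf (interval_measure (cdf N)) = cdf N"
    using cdf_interval_measure[of "cdf N"] a b c by blast
  then show ?thesis using cdf_unique[OF R assms] by blast
qed

lemma truncate_props:
  fixes M :: "real measure"
  assumes Msp: "M \<in> space (prob_algebra borel)" and Mi: "integrable M (\<lambda>x. x)"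
    and cont: "continuous_on UNIV (cdf_of M)"
    and eta: "0 \<le> \<eta>" "\<eta> < 1"
  shows "truncate \<eta> M \<in> space (prob_algebra borel) \<and> integrable (truncate \<eta> M) (\<lambda>x. x)
         \<and> expect (truncate \<eta> M) \<le> expect M"
proof -
  have RD: "real_distribution M"
    using Msp by (auto simp: space_prob_algebra real_distribution_def real_distribution_axioms_def)
  interpret real_distribution M by (rule RD)
  have cdfeq: "cdf_of M = cdf M" by (simp add: cdf_of_def cdf_def fun_eq_iff)
  define u where "u = 1 - \<eta>"
  have u: "0 < u" "u \<le> 1" using eta by (auto simp: u_def)
  define T where "T = {z. u \<le> cdf M z}"
  have contF: "continuous_on UNIV (cdf M)" using cont cdfeq by simp
  show ?thesis
  proof (cases "T = {}")
    case True
    have "u \<ge> 1"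
    proof (rule ccontr)
      assume "\<not> u \<ge> 1"
      then have "eventually (\<lambda>z. u < cdf M z) at_top"
        using order_tendstoD(1)[OF cdf_lim_at_top_prob, of u] by simp
      then obtain z where "u < cdf M z" by (auto simp: eventually_at_top_linorder)
      then have "z \<in> T" by (simp add: T_def)
      then show False using True by simp
    qed
    then have u1: "u = 1" using u by simp
    have e0: "\<eta> = 0" using u1 by (simp add: u_def)
    have q: "quantile_of M 1 = \<top>"
      using True u1 by (simp add: quantile_of_def T_def cdfeq)
    have "trunc_cdf \<eta> M = cdf M"
      by (auto simp: fun_eq_iff trunc_cdf_def q cdfeq e0)
    then have tM: "truncate \<eta> M = M"
      by (simp add: truncate_def interval_measure_cdf[OF RD])
    show ?thesis using tM Msp Mi by simp
  next
    case False
    obtain z0 where z0: "\<And>z. z \<le> z0 \<Longrightarrow> cdf M z < u"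
      using order_tendstoD(2)[OF cdf_lim_at_bot, of u] u by (auto simp: eventually_at_bot_linorder)
    have bdd: "bdd_below T"
    proof (rule bdd_belowI[of _ z0])
      fix x assume "x \<in> T"
      then show "z0 \<le> x" using z0[of x] by (force simp: T_def)
    qed
    have clT: "closed T" unfolding T_def
      by (rule closed_Collect_le) (use contF in auto)
    define q0 where "q0 = Inf T"
    have q0T: "q0 \<in> T" unfolding q0_def by (rule closed_contains_Inf[OF False bdd clT])
    have below: "cdf M z < u" if "z < q0" for z
    proof (rule ccontr)
      assume "\<not> cdf M z < u"
      then have "z \<in> T" by (simp add: T_def)
      then have "q0 \<le> z" unfolding q0_def by (rule cInf_lower[OF _ bdd])
      then show False using that by simp
    qed
    have Fq0: "cdf M q0 = u"
    proof (rule antisym)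
      show "u \<le> cdf M q0" using q0T by (simp add: T_def)
      have "isCont (cdf M) q0" using contF by (simp add: continuous_on_eq_continuous_at)
      then have "(cdf M \<longlongrightarrow> cdf M q0) (at_left q0)"
        by (simp add: isCont_def filterlim_at_split)
      moreover have "eventually (\<lambda>z. cdf M z \<le> u) (at_left q0)"
        using eventually_at_left_real[of "q0 - 1" q0]
        by (rule eventually_mono) (auto intro: less_imp_le below)
      ultimately show "cdf M q0 \<le> u"
        by (rule tendsto_upperbound) simp
    qed
    have quant: "quantile_of M (1 - \<eta>) = ereal q0"
      unfolding quantile_of_def q0_def ereal_Inf'[OF bdd False]
      by (simp add: T_def cdfeq u_def)
    define g where "g x = indicator {..q0} x / u" for x :: real
    have g_nn: "0 \<le> g x" for x using u by (simp add: g_def)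
    have gm[measurable]: "g \<in> borel_measurable M" unfolding g_def by measurable
    define N where "N = density M g"
    have sN: "sets N = sets borel" by (simp add: N_def)
    have eN: "emeasure N A = ennreal (1 / u) * emeasure M ({..q0} \<inter> A)" if "A \<in> sets borel" for A
    proof -
      have "emeasure N A = (\<integral>\<^sup>+x. ennreal (g x) * indicator A x \<partial>M)"
        unfolding N_def by (rule emeasure_density) (use that in auto)
      also have "\<dots> = (\<integral>\<^sup>+x. ennreal (1 / u) * indicator ({..q0} \<inter> A) x \<partial>M)"
        by (rule nn_integral_cong) (simp add: g_def indicator_def)
      also have "\<dots> = ennreal (1 / u) * emeasure M ({..q0} \<inter> A)"
        by (rule nn_integral_cmult_indicator) (use that in auto)
      finally show ?thesis .
    qed
    have mN: "measure N A = (1 / u) * cdf M (min z q0)" if "A = {..z}" for A z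
    proof -
      have "emeasure N A = ennreal (1 / u) * ennreal (cdf M (min z q0))"
      proof -
        have "{..q0} \<inter> {..z} = {..min z q0}" by auto
        then show ?thesis using eN[of A] that by (simp add: emeasure_eq_measure cdf_def)
      qed
      also have "\<dots> = ennreal ((1 / u) * cdf M (min z q0))"
        using u by (subst ennreal_mult[symmetric]) (simp_all add: cdf_nonneg)
      finally show ?thesis
        using u by (simp add: measure_def cdf_nonneg)
    qed
    have PN: "prob_space N"
    proof
      have "emeasure N UNIV = ennreal (1 / u) * emeasure M {..q0}"
        using eN[of UNIV] by simp
      also have "\<dots> = 1" using u Fq0
        by (simp add: emeasure_eq_measure cdf_def ennreal_mult[symmetric])
      finally show "emeasure N (space N) = 1"
        using sets_eq_imp_space_eq[OF sN] by simp
    qed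
    have RN: "real_distribution N"
      using PN sN by (simp add: real_distribution_def real_distribution_axioms_def)
    have "trunc_cdf \<eta> M = cdf N"
    proof
      fix z
      show "trunc_cdf \<eta> M z = cdf N z"
        using u Fq0 by (auto simp: trunc_cdf_def quant cdfeq cdf_def[of N] mN u_def min_def)
    qed
    then have tN: "truncate \<eta> M = N"
      by (simp add: truncate_def interval_measure_cdf[OF RN])
    have sp: "N \<in> space (prob_algebra borel)"
      using PN sN by (simp add: space_prob_algebra)
    have i1: "integrable M (\<lambda>x. indicator {..q0} x *\<^sub>R ((1 / u) * x))"
      by (rule integrable_mult_indicator) (use Mi in auto)
    have i2: "integrable M (\<lambda>x. g x *\<^sub>R x)"
      using i1 by (simp add: g_def indicator_def)
    have iN: "integrable N (\<lambda>x. x)"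
      unfolding N_def by (subst integrable_density) (use i2 g_nn in auto)
    have expN: "expect N = (\<integral>x. g x * x \<partial>M)"
      unfolding expect_def N_def by (subst integral_density) (use g_nn in auto)
    have ig: "integrable M g" unfolding g_def
      by (intro integrable_divide integrable_real_indicator) (auto simp: emeasure_eq_measure)
    have ic: "integrable M (\<lambda>x. q0 * (g x - 1))"
      using ig by auto
    have i3: "integrable M (\<lambda>x. g x * x - x - q0 * (g x - 1))"
      using i2 Mi ic by auto
    have I1: "(\<integral>x. g x * x - x - q0 * (g x - 1) \<partial>M) \<le> (\<integral>x. 0 \<partial>M)"
    proof (rule integral_mono[OF i3])
      fix x :: real
      have "(g x - 1) * (x - q0) \<le> 0"
      proof (cases "x \<le> q0")
        case True
        have "g x - 1 \<ge> 0" using True u by (simp add: g_def field_simps)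
        then show ?thesis using True by (simp add: mult_nonneg_nonpos)
      next
        case False
        then show ?thesis by (simp add: g_def)
      qed
      then show "g x * x - x - q0 * (g x - 1) \<le> 0" by (simp add: algebra_simps)
    qed simp
    have "(\<integral>x. g x \<partial>M) = 1"
      unfolding g_def using u Fq0 by (simp add: cdf_def)
    then have I2: "(\<integral>x. q0 * (g x - 1) \<partial>M) = 0"
    proof -
      have "prob UNIV = 1" using prob_space by simp
      then show ?thesis using ig \<open>(\<integral>x. g x \<partial>M) = 1\<close> by simp
    qed
    have "(\<integral>x. g x * x - x - q0 * (g x - 1) \<partial>M) = (\<integral>x. g x * x \<partial>M) - expect M - (\<integral>x. q0 * (g x - 1) \<partial>M)"
      using i2 Mi ic by (simp add: expect_def)
    note E = this
    have Z: "(\<integral>x. (0::real) \<partial>M) = 0" by simp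
    have "expect N \<le> expect M" using I1 I2 expN E Z by linarith
    then show ?thesis using tN sp iN by simp
  qed
qed


theorem lemma10:
  fixes S :: "'s measure" and A :: "'a measure"
    and penv :: "'s \<times> 'a \<Rightarrow> (real \<times> 's) measure"
    and pol :: "'s \<Rightarrow> 'a measure"
    and \<gamma> \<eta> :: real
    and Zinit :: "('s, 'a) rfield"
    and Z Z0 :: "nat \<Rightarrow> ('s, 'a) rfield"
  assumes gamma: "0 \<le> \<gamma>" "\<gamma> < 1"
    and eta: "0 \<le> \<eta>" "\<eta> < 1"
    and penv: "penv \<in> measurable (S \<Otimes>\<^sub>M A) (prob_algebra (borel \<Otimes>\<^sub>M S))"
    and pol: "pol \<in> measurable S (prob_algebra A)"
    and Z_0: "Z 0 = Zinit" and Z_Suc: "\<And>t. Z (Suc t) = bellman_trunc penv pol \<gamma> \<eta> (Z t)"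
    and Z0_0: "Z0 0 = Zinit" and Z0_Suc: "\<And>t. Z0 (Suc t) = bellman penv pol \<gamma> (Z0 t)"
    and Z_field: "\<And>t. is_rfield S A (Z t)"
    and Z0_field: "\<And>t. is_rfield S A (Z0 t)"
    and Z_cont: "\<And>t s a. s \<in> space S \<Longrightarrow> a \<in> space A \<Longrightarrow> continuous_on UNIV (cdf_of (Z t (s, a)))"
  shows "\<forall>t. \<forall>s\<in>space S. \<forall>a\<in>space A. expect (Z t (s, a)) \<le> expect (Z0 t (s, a))"
proof
  fix t
  have fld: "X (s, a) \<in> space (prob_algebra borel) \<and> integrable (X (s, a)) (\<lambda>x. x)"
    if "is_rfield S A X" "s \<in> space S" "a \<in> space A" for X :: "('s, 'a) rfield" and s a
  proof -
    have "(s, a) \<in> space (S \<Otimes>\<^sub>M A)" using that by (simp add: space_pair_measure)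
    then show ?thesis using that measurable_space[of X "S \<Otimes>\<^sub>M A" "prob_algebra borel" "(s, a)"]
      by (auto simp: is_rfield_def)
  qed
  show "\<forall>s\<in>space S. \<forall>a\<in>space A. expect (Z t (s, a)) \<le> expect (Z0 t (s, a))"
  proof (induction t)
    case 0
    then show ?case by (simp add: Z_0 Z0_0)
  next
    case (Suc t)
    show ?case
    proof (intro ballI)
      fix s a assume s: "s \<in> space S" and a: "a \<in> space A"
      let ?W1 = "truncate_field \<eta> (Z t)" and ?W0 = "Z0 t"
      have W1: "?W1 (s', a') \<in> space (prob_algebra borel) \<and> integrable (?W1 (s', a')) (\<lambda>x. x)
                 \<and> expect (?W1 (s', a')) \<le> expect (?W0 (s', a'))"
        if "s' \<in> space S" "a' \<in> space A" for s' a'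
      proof -
        have T: "truncate \<eta> (Z t (s', a')) \<in> space (prob_algebra borel) \<and>
             integrable (truncate \<eta> (Z t (s', a'))) (\<lambda>x. x) \<and>
             expect (truncate \<eta> (Z t (s', a'))) \<le> expect (Z t (s', a'))"
          using truncate_props[of "Z t (s', a')" \<eta>] fld[OF Z_field that] Z_cont[OF that] eta by blast
        have "expect (Z t (s', a')) \<le> expect (Z0 t (s', a'))" using Suc that by blast
        then show ?thesis using T by (simp add: truncate_field_def)
      qed
      have W0: "?W0 (s', a') \<in> space (prob_algebra borel) \<and> integrable (?W0 (s', a')) (\<lambda>x. x)"
        if "s' \<in> space S" "a' \<in> space A" for s' a'
        using fld[OF Z0_field that] .
      have sa: "(s, a) \<in> space (S \<Otimes>\<^sub>M A)" using s a by (simp add: space_pair_measure)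
      have Msp: "penv (s, a) \<in> space (prob_algebra (borel \<Otimes>\<^sub>M S))"
        using measurable_space[OF penv sa] .
      have spM: "space (penv (s, a)) = UNIV \<times> space S"
        using Msp sets_eq_imp_space_eq[of "penv (s, a)" "borel \<Otimes>\<^sub>M S"]
        by (auto simp: space_prob_algebra space_pair_measure)
      have B1: "bellman penv pol \<gamma> ?W1 (s, a) \<in> space (prob_algebra borel)"
               "integrable (bellman penv pol \<gamma> ?W1 (s, a)) (\<lambda>x. x)"
        using fld[OF Z_field[of "Suc t"] s a] by (simp_all add: Z_Suc bellman_trunc_def)
      have B0: "bellman penv pol \<gamma> ?W0 (s, a) \<in> space (prob_algebra borel)"
               "integrable (bellman penv pol \<gamma> ?W0 (s, a)) (\<lambda>x. x)"
        using fld[OF Z0_field[of "Suc t"] s a] by (simp_all add: Z0_Suc)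
      have e1: "expect (Z (Suc t) (s, a)) = expect (bellman penv pol \<gamma> ?W1 (s, a))"
        by (simp add: Z_Suc bellman_trunc_def)
      have e0: "expect (Z0 (Suc t) (s, a)) = expect (bellman penv pol \<gamma> ?W0 (s, a))"
        by (simp add: Z0_Suc)
      show "expect (Z (Suc t) (s, a)) \<le> expect (Z0 (Suc t) (s, a))"
      proof -
        have W1': "\<forall>s'\<in>space S. \<forall>a'\<in>space A.
              ?W1 (s', a') \<in> space (prob_algebra borel) \<and> integrable (?W1 (s', a')) (\<lambda>x. x)"
          using W1 by blast
        have W0': "\<forall>s'\<in>space S. \<forall>a'\<in>space A.
              ?W0 (s', a') \<in> space (prob_algebra borel) \<and> integrable (?W0 (s', a')) (\<lambda>x. x)"
          using W0 by blast
        note F1 = bellman_expect[where W="truncate_field \<eta> (Z t)", OF Msp pol W1' B1 refl] and F0 = bellman_expect[where W="Z0 t", OF Msp pol W0' B0 refl]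
        have "(\<integral>\<omega>. expect (case \<omega> of (r, s') \<Rightarrow> pol s' \<bind> (\<lambda>a'. distr (?W1 (s', a')) borel (\<lambda>z. r + \<gamma> * z))) \<partial>penv (s, a))
          \<le> (\<integral>\<omega>. expect (case \<omega> of (r, s') \<Rightarrow> pol s' \<bind> (\<lambda>a'. distr (?W0 (s', a')) borel (\<lambda>z. r + \<gamma> * z))) \<partial>penv (s, a))"
        proof (rule integral_mono_AE[OF F1(1) F0(1)])
          show "AE \<omega> in penv (s, a). expect (case \<omega> of (r, s') \<Rightarrow> pol s' \<bind> (\<lambda>a'. distr (?W1 (s', a')) borel (\<lambda>z. r + \<gamma> * z)))
             \<le> expect (case \<omega> of (r, s') \<Rightarrow> pol s' \<bind> (\<lambda>a'. distr (?W0 (s', a')) borel (\<lambda>z. r + \<gamma> * z)))"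
            using F1(3) F0(3) AE_space
          proof eventually_elim
            case (elim \<omega>)
            obtain r s' where \<omega>: "\<omega> = (r, s')" "s' \<in> space S" using elim(3) spM by auto
            have sp: "space (pol s') = space A"
              using measurable_space[OF pol \<omega>(2)]
              by (auto simp: space_prob_algebra dest: sets_eq_imp_space_eq)
            have "(\<integral>a'. r + \<gamma> * expect (?W1 (s', a')) \<partial>pol s') \<le> (\<integral>a'. r + \<gamma> * expect (?W0 (s', a')) \<partial>pol s')"
            proof (rule integral_mono)
              show "integrable (pol s') (\<lambda>a'. r + \<gamma> * expect (?W1 (s', a')))" using elim(1) \<omega> by simp
              show "integrable (pol s') (\<lambda>a'. r + \<gamma> * expect (?W0 (s', a')))" using elim(2) \<omega> by simp
              fix a' assume "a' \<in> space (pol s')"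
              then have "a' \<in> space A" using sp by simp
              then have "expect (?W1 (s', a')) \<le> expect (?W0 (s', a'))" using W1[OF \<omega>(2)] by blast
              then show "r + \<gamma> * expect (?W1 (s', a')) \<le> r + \<gamma> * expect (?W0 (s', a'))"
                using gamma(1) by (simp add: mult_left_mono)
            qed
            then show ?case using elim(1,2) \<omega> by simp
          qed
        qed
        then show ?thesis using e1 e0 F1(2) F0(2) by simp
      qed
    qed
  qed
qed

end
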